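(* Let $(\pi_r)_{r\in\mathbb{N}}$ be a sequence of natural numbers (periods) and let $(k_t)_{t\in\mathbb{N}}$ be the multiperiodic sequence with periods $(\pi_r)_{r\in\mathbb{N}}$ and seeds $\sigma_r=1$ for all $r\in\mathbb{N}$. Then for every $r\in\mathbb{N}$ the limit $$f_r:=\lim_{T\to\infty}\frac{1}{T}\sum_{t=1}^T \mathbf{1}\{k_t\ge r\}$$ exists and $$f_r=\left(\frac{\pi_1-1}{\pi_1}\right)\left(\frac{\pi_2-1}{\pi_2}\right)\cdots\left(\frac{\pi_{r-1}-1}{\pi_{r-1}}\right),$$ with the empty product (for $r=1$) equal to $1$.
   Context: $\mathbb{N}=\{1,2,3,\dots\}$. Multiperiodic sequence: given periods $\pi_r\in\mathbb{N}$ and seeds $\sigma_r\in\{1,2,\dots,\pi_r\}$ for $r\in\mathbb{N}$, the sequence $(k_t)_{t\in\mathbb{N}}$ with values in $\mathbb{N}\cup\{\infty\}$ is defined by the requirement that for each $r\in\mathbb{N}$, if $(k^{(r)}_t)_{t\in\mathbb{N}}$ denotes the subsequence of $(k_t)$ obtained by deleting all tokens $k_t<r$, then $k^{(r)}_t=r \iff t\equiv\sigma_r \pmod{\pi_r}$; any $k_t$ left undefined by these constraints for all $r$ is set to $k_t=\infty$. Equivalently, it is generated by clocks $\phi_r$ initialized to $\phi_r=\sigma_r$: to produce each token, scan $r=1,2,\dots$, decrementing each clock $\phi_r>1$, until the first $r$ with $\phi_r=1$; output $k_t=r$ and reset $\phi_r=\pi_r$ (if no such $r$ exists, $k_t=\infty$).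 With all seeds equal to $1$ the sequence is finite (all $k_t<\infty$). $\mathbf{1}\{\cdot\}$ is the indicator. *)

theory Defs
  imports Complex_Main "HOL-Library.Extended_Nat"
begin

text \<open>Clock generation of a multiperiodic sequence. Indices r and times t start at 1;
  index 0 of the clock vector is unused. A clock state is phi :: nat => nat.\<close>

definition clock_fires :: "(nat \<Rightarrow> nat) \<Rightarrow> bool" where
  "clock_fires phi \<longleftrightarrow> (\<exists>r\<ge>1. phi r = 1)"

definition first_fire :: "(nat \<Rightarrow> nat) \<Rightarrow> nat" where
  "first_fire phi = (LEAST r. r \<ge> 1 \<and> phi r = 1)"

definition clock_step :: "(nat \<Rightarrow> nat) \<Rightarrow> (nat \<Rightarrow> nat) \<Rightarrow> (nat \<Rightarrow> nat)" where
  "clock_step per phi =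
     (if clock_fires phi then
        (\<lambda>r. if 1 \<le> r \<and> r < first_fire phi then (if phi r > 1 then phi r - 1 else phi r)
             else if r = first_fire phi then per r else phi r)
      else (\<lambda>r. if 1 \<le> r \<and> phi r > 1 then phi r - 1 else phi r))"

definition clock_out :: "(nat \<Rightarrow> nat) \<Rightarrow> enat" where
  "clock_out phi = (if clock_fires phi then enat (first_fire phi) else \<infinity>)"

text \<open>clocks per seed n = clock state before producing token n+1.\<close>
primrec clocks :: "(nat \<Rightarrow> nat) \<Rightarrow> (nat \<Rightarrow> nat) \<Rightarrow> nat \<Rightarrow> (nat \<Rightarrow> nat)" where
  "clocks per seed 0 = seed"
| "clocks per seed (Suc n) = clock_step per (clocks per seed n)"

definition multiperiodic :: "(nat \<Rightarrow> nat) \<Rightarrow> (nat \<Rightarrow> nat) \<Rightarrow> nat \<Rightarrow> enat" where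
  "multiperiodic per seed t = clock_out (clocks per seed (t - 1))"

end

theory Submission
  imports Defs
begin

abbreviation ph :: "(nat \<Rightarrow> nat) \<Rightarrow> nat \<Rightarrow> nat \<Rightarrow> nat" where
  "ph per t \<equiv> clocks per (\<lambda>_. 1) t"

lemma inv1: "\<forall>r>t. ph per t r = 1"
proof (induction t)
  case 0 then show ?case by simp
next
  case (Suc t)
  have f: "clock_fires (ph per t)" using Suc unfolding clock_fires_def
    by (intro exI[of _ "Suc t"]) auto
  have le: "first_fire (ph per t) \<le> Suc t" unfolding first_fire_def
    using Suc by (intro Least_le) auto
  show ?case using f le Suc by (auto simp: clock_step_def)
qed

lemma ff_props:
  shows "clock_fires (ph per t)" "1 \<le> first_fire (ph per t)"
    "ph per t (first_fire (ph per t)) = 1"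
    "\<And>r. 1 \<le> r \<Longrightarrow> r < first_fire (ph per t) \<Longrightarrow> ph per t r \<noteq> 1"
    "clock_out (ph per t) = enat (first_fire (ph per t))"
proof -
  have e: "\<exists>r. r \<ge> 1 \<and> ph per t r = 1" using inv1[of t per] by (intro exI[of _ "Suc t"]) auto
  show "clock_fires (ph per t)" using e unfolding clock_fires_def by auto
  show "1 \<le> first_fire (ph per t)" "ph per t (first_fire (ph per t)) = 1"
    using LeastI_ex[OF e] unfolding first_fire_def by auto
  show "\<And>r. 1 \<le> r \<Longrightarrow> r < first_fire (ph per t) \<Longrightarrow> ph per t r \<noteq> 1"
    unfolding first_fire_def using not_less_Least by blast
  show "clock_out (ph per t) = enat (first_fire (ph per t))"
    using e unfolding clock_out_def clock_fires_def by auto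
qed

definition G :: "nat \<Rightarrow> nat \<Rightarrow> nat" where
  "G p n = (if n mod p = 0 then 1 else p + 1 - n mod p)"

lemma G_one: "p \<ge> 1 \<Longrightarrow> G p n = 1 \<longleftrightarrow> n mod p = 0"
proof -
  assume "p \<ge> 1" then have "n mod p < p" by simp
  moreover have "G p n = (if n mod p = 0 then 1 else p + 1 - n mod p)" by (simp add: G_def)
  ultimately show ?thesis by (simp split: if_splits)
qed

lemma G_ge1: "p \<ge> 1 \<Longrightarrow> G p n \<ge> 1"
proof -
  assume "p \<ge> 1" then have "n mod p < p" by simp
  then show ?thesis unfolding G_def by auto
qed

lemma G_Suc: "p \<ge> 1 \<Longrightarrow> G p (Suc n) = (if G p n = 1 then p else G p n - 1)"
proof -
  assume "p \<ge> 1" then have "n mod p < p" by simp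
  then show ?thesis unfolding G_def by (auto simp: mod_Suc)
qed

definition cnt :: "(nat \<Rightarrow> nat) \<Rightarrow> nat \<Rightarrow> nat \<Rightarrow> nat" where
  "cnt per r t = (\<Sum>s<t. if enat r \<le> clock_out (ph per s) then 1 else 0)"

lemma cnt_Suc: "cnt per r (Suc t) = cnt per r t + (if r \<le> first_fire (ph per t) then 1 else 0)"
  unfolding cnt_def using ff_props(5)[of per t] by simp

lemma inv2:
  assumes P: "\<forall>i\<ge>1. per i \<ge> 1"
  shows "\<forall>r\<ge>1. ph per t r = G (per r) (cnt per r t)"
proof (induction t)
  case 0 then show ?case by (simp add: cnt_def G_def)
next
  case (Suc t)
  show ?case
  proof (intro allI impI)
    fix r :: nat assume r: "r \<ge> 1"
    define ff where "ff = first_fire (ph per t)"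
    have p: "per r \<ge> 1" using P r by auto
    have IH: "ph per t r = G (per r) (cnt per r t)" using Suc r by auto
    have st: "ph per (Suc t) r = (if r < ff then (if ph per t r > 1 then ph per t r - 1 else ph per t r)
             else if r = ff then per r else ph per t r)"
      using ff_props(1)[of per t] r by (simp add: clock_step_def ff_def)
    consider "r < ff" | "r = ff" | "r > ff" by linarith
    then show "ph per (Suc t) r = G (per r) (cnt per r (Suc t))"
    proof cases
      case 1
      have "ph per t r \<noteq> 1" using ff_props(4)[of r per t] 1 r ff_def by auto
      moreover have "ph per t r \<ge> 1" using IH G_ge1[OF p] by auto
      ultimately show ?thesis using 1 st IH cnt_Suc[of per r t] G_Suc[OF p] ff_def by auto
    next
      case 2
      have "ph per t r = 1" using ff_props(3)[of per t] 2 ff_def by auto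
      then show ?thesis using 2 st IH cnt_Suc[of per r t] G_Suc[OF p] ff_def by auto
    next
      case 3
      then show ?thesis using st IH cnt_Suc[of per r t] ff_def by auto
    qed
  qed
qed

definition D :: "nat \<Rightarrow> nat \<Rightarrow> nat" where "D p n = (n + p - 1) div p"

lemma D_Suc: assumes "p \<ge> 1" shows "D p (Suc n) = D p n + (if n mod p = 0 then 1 else 0)"
proof -
  define q where "q = n div p"
  define m where "m = n mod p"
  have n: "n = p * q + m" unfolding q_def m_def by simp
  have m: "m < p" unfolding m_def using assms by simp
  have a: "(Suc n + p - 1) div p = q + 1"
    by (rule div_nat_eqI) (use n m assms in \<open>auto simp: algebra_simps\<close>)
  show ?thesis
  proof (cases "m = 0")
    case True
    have "(n + p - 1) div p = q"
      by (rule div_nat_eqI) (use n m True assms in \<open>auto simp: algebra_simps\<close>)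
    then show ?thesis using a True m_def unfolding D_def by simp
  next
    case False
    have "(n + p - 1) div p = q + 1"
      by (rule div_nat_eqI) (use n m False assms in \<open>auto simp: algebra_simps\<close>)
    then show ?thesis using a False m_def unfolding D_def by simp
  qed
qed

lemma D_le: "p \<ge> 1 \<Longrightarrow> D p n \<le> n"
  by (induction n) (auto simp: D_Suc, simp add: D_def)

lemma cnt_rec:
  assumes P: "\<forall>i\<ge>1. per i \<ge> 1" and r: "r \<ge> 1"
  shows "cnt per (Suc r) t = cnt per r t - D (per r) (cnt per r t)"
proof (induction t)
  case 0 then show ?case by (simp add: cnt_def)
next
  case (Suc t)
  define ff where "ff = first_fire (ph per t)"
  define n where "n = cnt per r t"
  have p: "per r \<ge> 1" using P r by auto
  have g: "ph per t r = G (per r) n" using inv2[OF P] r n_def by auto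
  have dl: "D (per r) n \<le> n" using D_le[OF p] .
  consider "r < ff" | "r = ff" | "r > ff" by linarith
  then show ?case
  proof cases
    case 1
    have "ph per t r \<noteq> 1" using ff_props(4)[of r per t] 1 r ff_def by auto
    then have "n mod per r \<noteq> 0" using g G_one[OF p] by auto
    then show ?thesis using 1 Suc cnt_Suc[of per r t] cnt_Suc[of per "Suc r" t] D_Suc[OF p, of n] dl
      ff_def n_def by auto
  next
    case 2
    have "ph per t r = 1" using ff_props(3)[of per t] 2 ff_def by auto
    then have "n mod per r = 0" using g G_one[OF p] by auto
    then show ?thesis using 2 Suc cnt_Suc[of per r t] cnt_Suc[of per "Suc r" t] D_Suc[OF p, of n] dl
      ff_def n_def by auto
  next
    case 3
    then show ?thesis using Suc cnt_Suc[of per r t] cnt_Suc[of per "Suc r" t] ff_def n_def by auto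
  qed
qed

lemma D_bounds: assumes "p \<ge> 1" shows "n \<le> p * D p n" "p * D p n \<le> n + p"
proof -
  have e: "p * D p n + (n + p - 1) mod p = n + p - 1" unfolding D_def
    by (metis mult.commute div_mult_mod_eq)
  have "(n + p - 1) mod p < p" using assms by simp
  then show "n \<le> p * D p n" "p * D p n \<le> n + p" using e assms by linarith+
qed

lemma D_real: assumes "p \<ge> 1" and "T \<ge> 1"
  shows "real n / real p / real T \<le> real (D p n) / real T"
        "real (D p n) / real T \<le> real n / real p / real T + 1 / real T"
proof -
  have pp: "real p > 0" "real T > 0" using assms by auto
  have "real n \<le> real p * real (D p n)" using D_bounds(1)[OF assms(1), of n] by (metis of_nat_le_iff of_nat_mult)
  then have h: "real n / real p \<le> real (D p n)" using pp by (simp add: divide_le_eq mult.commute)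
  show "real n / real p / real T \<le> real (D p n) / real T" using divide_right_mono[OF h, of "real T"] pp by simp
  have "real p * real (D p n) \<le> real n + real p" using D_bounds(2)[OF assms(1), of n] by (metis of_nat_le_iff of_nat_mult of_nat_add)
  then have "real (D p n) \<le> real n / real p + 1" using pp by (simp add: field_simps)
  then have "real (D p n) / real T \<le> (real n / real p + 1) / real T" using pp by (simp add: divide_right_mono)
  then show "real (D p n) / real T \<le> real n / real p / real T + 1 / real T" by (simp add: add_divide_distrib)
qed

lemma cnt_one: "cnt per 1 T = T"
  unfolding cnt_def using ff_props(2,5) by (simp add: one_enat_def)

lemma lim_cnt:
  assumes P: "\<forall>i\<ge>1. per i \<ge> 1" and r: "r \<ge> 1"
  shows "(\<lambda>T. real (cnt per r T) / real T) \<longlonglongrightarrow> (\<Prod>i=1..<r. (real (per i) - 1) / real (per i))"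
  using r
proof (induction r rule: dec_induct)
  case base
  have "\<forall>\<^sub>F T in sequentially. 1 = real (cnt per 1 T) / real T"
    using eventually_ge_at_top[of "1::nat"] by eventually_elim (simp only: cnt_one, simp)
  then have "(\<lambda>T. real (cnt per 1 T) / real T) \<longlonglongrightarrow> 1"
    by (rule Lim_transform_eventually[OF tendsto_const])
  then show ?case by simp
next
  case (step r)
  define p where "p = per r"
  define L where "L = (\<Prod>i=1..<r. (real (per i) - 1) / real (per i))"
  have p: "p \<ge> 1" using P step(1) p_def by auto
  have a: "(\<lambda>T. real (cnt per r T) / real T) \<longlonglongrightarrow> L" using step(3) L_def by simp
  have lo: "(\<lambda>T. real (cnt per r T) / real T / real p) \<longlonglongrightarrow> L / real p"
    by (intro tendsto_intros a) (use p in simp)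
  have hi: "(\<lambda>T. real (cnt per r T) / real T / real p + 1 / real T) \<longlonglongrightarrow> L / real p + 0"
    by (intro tendsto_intros a) (use p in simp)
  have d: "(\<lambda>T. real (D p (cnt per r T)) / real T) \<longlonglongrightarrow> L / real p"
  proof (rule tendsto_sandwich[OF _ _ lo])
    show "\<forall>\<^sub>F T in sequentially. real (cnt per r T) / real T / real p \<le> real (D p (cnt per r T)) / real T"
      using eventually_ge_at_top[of "1::nat"] by eventually_elim
        (use D_real(1)[OF p] in \<open>simp add: divide_divide_eq_left mult.commute\<close>)
    show "\<forall>\<^sub>F T in sequentially. real (D p (cnt per r T)) / real T \<le> real (cnt per r T) / real T / real p + 1 / real T"
      using eventually_ge_at_top[of "1::nat"] by eventually_elim
        (use D_real(2)[OF p] in \<open>simp add: divide_divide_eq_left mult.commute\<close>)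
    show "(\<lambda>T. real (cnt per r T) / real T / real p + 1 / real T) \<longlonglongrightarrow> L / real p"
      using hi by simp
  qed
  have eq: "real (cnt per (Suc r) T) / real T = real (cnt per r T) / real T - real (D p (cnt per r T)) / real T" for T
    using cnt_rec[OF P step(1), of T] D_le[OF p, of "cnt per r T"] p_def
    by (simp add: of_nat_diff diff_divide_distrib)
  have "(\<lambda>T. real (cnt per (Suc r) T) / real T) \<longlonglongrightarrow> L - L / real p"
    unfolding eq by (intro tendsto_intros a d)
  moreover have "L - L / real p = (\<Prod>i=1..<Suc r. (real (per i) - 1) / real (per i))"
    using step(1) p unfolding L_def p_def by (simp add: prod.atLeastLessThan_Suc field_simps)
  ultimately show ?case by simp
qed

theorem theorem1:
  fixes per :: "nat \<Rightarrow> nat" and r :: nat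
  assumes "\<forall>i\<ge>1. per i \<ge> 1"
    and "r \<ge> 1"
  shows "(\<lambda>T. (\<Sum>t=1..T. if multiperiodic per (\<lambda>_. 1) t \<ge> enat r then 1 else 0) / real T)
           \<longlonglongrightarrow> (\<Prod>i=1..<r. (real (per i) - 1) / real (per i))"
proof -
  have "(\<Sum>t=1..T. if multiperiodic per (\<lambda>_. 1) t \<ge> enat r then 1 else 0) = real (cnt per r T)" for T
  proof (induction T)
    case 0 then show ?case by (simp add: cnt_def)
  next
    case (Suc T) then show ?case by (simp add: cnt_def multiperiodic_def)
  qed
  then show ?thesis using lim_cnt[OF assms] by simp
qed

end
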